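(* For every $k\in[K]$, the function $f_k:\mathbb{R}^K_{\ge0}\setminus\{\mathbf{0}\}\to\mathbb{R}$ is a $0$-homogeneous rational function of ${\bm{r}}$.
   Context: Setting: distributions $\mathcal{D}_1,\dots,\mathcal{D}_K$ on $\mathcal{Z}$, a loss $\ell(h,{\bm{z}})$ (all expectations finite), $N\ge1$, and a learning algorithm $\mathcal{A}:\mathcal{Z}^N\to\mathcal{H}$. For ${\bm{r}}\in\Delta_K=\{{\bm{r}}\ge0:\sum_kr_k=1\}$, $\bar e_k({\bm{r}})=\mathbb{E}_{S\sim(\sum_jr_j\mathcal{D}_j)^N}\mathbb{E}_{{\bm{z}}\sim\mathcal{D}_k}[\ell(\mathcal{A}(S),{\bm{z}})]$, and $f_k({\bm{r}})=\bar e_k({\bm{r}}/|{\bm{r}}|)$ for ${\bm{r}}\in\mathbb{R}^K_{\ge0}\setminus\{\mathbf{0}\}$, $|{\bm{r}}|=\sum_jr_j$. *)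

theory Defs
  imports "HOL-Probability.Probability"
begin

text \<open>Vectors in R^K are functions from a finite index type 'n (with K = CARD('n))
  to the reals.\<close>

definition mpoly_fun :: "(('n::finite \<Rightarrow> real) \<Rightarrow> real) \<Rightarrow> bool" where
  "mpoly_fun p \<longleftrightarrow> (\<exists>C c. finite C \<and>
     (\<forall>r. p r = (\<Sum>\<alpha>\<in>C. c \<alpha> * (\<Prod>j\<in>UNIV. r j ^ \<alpha> j))))"

definition rational_fun_on :: "('n::finite \<Rightarrow> real) set \<Rightarrow> (('n \<Rightarrow> real) \<Rightarrow> real) \<Rightarrow> bool" where
  "rational_fun_on U f \<longleftrightarrow> (\<exists>P Q. mpoly_fun P \<and> mpoly_fun Q \<and>
     (\<forall>r\<in>U. Q r \<noteq> 0 \<and> f r = P r / Q r))"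

definition zero_homogeneous_on :: "('n::finite \<Rightarrow> real) set \<Rightarrow> (('n \<Rightarrow> real) \<Rightarrow> real) \<Rightarrow> bool" where
  "zero_homogeneous_on U f \<longleftrightarrow> (\<forall>r\<in>U. \<forall>c::real. c > 0 \<longrightarrow> f (\<lambda>j. c * r j) = f r)"

definition pos_orthant :: "('n::finite \<Rightarrow> real) set" where
  "pos_orthant = {r. (\<forall>j. 0 \<le> r j) \<and> r \<noteq> (\<lambda>_. 0)}"

definition mixture :: "'z measure \<Rightarrow> ('n::finite \<Rightarrow> 'z measure) \<Rightarrow> ('n \<Rightarrow> real) \<Rightarrow> 'z measure" where
  "mixture M D r = measure_of (space M) (sets M)
     (\<lambda>A. \<Sum>j\<in>UNIV. ennreal (r j) * emeasure (D j) A)"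

text \<open>bar e_k(r) = E_{S ~ (sum_j r_j D_j)^N} E_{z ~ D_k} [loss (A S) z];
  a sample S in Z^N is a function on {..<N}.\<close>

definition ebar :: "'z measure \<Rightarrow> ('n::finite \<Rightarrow> 'z measure) \<Rightarrow> ('h \<Rightarrow> 'z \<Rightarrow> real)
     \<Rightarrow> nat \<Rightarrow> ((nat \<Rightarrow> 'z) \<Rightarrow> 'h) \<Rightarrow> 'n \<Rightarrow> ('n \<Rightarrow> real) \<Rightarrow> real" where
  "ebar M D loss N A k r =
     (\<integral>S. (\<integral>z. loss (A S) z \<partial>(D k)) \<partial>(PiM {..<N} (\<lambda>_. mixture M D r)))"

definition fk :: "'z measure \<Rightarrow> ('n::finite \<Rightarrow> 'z measure) \<Rightarrow> ('h \<Rightarrow> 'z \<Rightarrow> real)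
     \<Rightarrow> nat \<Rightarrow> ((nat \<Rightarrow> 'z) \<Rightarrow> 'h) \<Rightarrow> 'n \<Rightarrow> ('n \<Rightarrow> real) \<Rightarrow> real" where
  "fk M D loss N A k r = ebar M D loss N A k (\<lambda>j. r j / (\<Sum>i\<in>UNIV. r i))"

end

theory Submission
  imports Defs
begin

lemma mix_sets[simp]: "sets (mixture M D r) = sets M"
  unfolding mixture_def by (simp add: sets.space_closed)

lemma mix_space[simp]: "space (mixture M D r) = space M"
  unfolding mixture_def by (simp add: sets.space_closed)

lemma mix_emeasure:
  assumes setsD: "\<And>j. sets (D j) = sets M" and A: "A \<in> sets M"
  shows "emeasure (mixture M D r) A = (\<Sum>j\<in>UNIV. ennreal (r j) * emeasure (D j) A)"
  unfolding mixture_def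
proof (rule emeasure_measure_of_sigma[OF sets.sigma_algebra_axioms _ _ A])
  show "positive (sets M) (\<lambda>A. \<Sum>j\<in>UNIV. ennreal (r j) * emeasure (D j) A)"
    by (simp add: positive_def)
  show "countably_additive (sets M) (\<lambda>A. \<Sum>j\<in>UNIV. ennreal (r j) * emeasure (D j) A)"
    unfolding countably_additive_def
  proof (intro allI impI)
    fix F :: "nat \<Rightarrow> _" assume F: "range F \<subseteq> sets M" "disjoint_family F" "\<Union> (range F) \<in> sets M"
    have "(\<Sum>n. \<Sum>j\<in>UNIV. ennreal (r j) * emeasure (D j) (F n)) = (\<Sum>j\<in>UNIV. \<Sum>n. ennreal (r j) * emeasure (D j) (F n))"
      by (rule suminf_sum) auto
    also have "\<dots> = (\<Sum>j\<in>UNIV. ennreal (r j) * emeasure (D j) (\<Union> (range F)))"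
      using F setsD by (simp add: suminf_emeasure)
    finally show "(\<Sum>n. \<Sum>j\<in>UNIV. ennreal (r j) * emeasure (D j) (F n)) = (\<Sum>j\<in>UNIV. ennreal (r j) * emeasure (D j) (\<Union> (range F)))" .
  qed
qed

lemma mix_nn_integral:
  assumes setsD: "\<And>j. sets (D j) = sets M" and f: "f \<in> borel_measurable M"
  shows "(\<integral>\<^sup>+x. f x \<partial>mixture M D r) = (\<Sum>j\<in>UNIV. ennreal (r j) * (\<integral>\<^sup>+x. f x \<partial>D j))"
  using f
proof induction
  case (cong f g)
  have sp: "\<And>j. space (D j) = space M" using setsD sets_eq_imp_space_eq by blast
  show ?case using cong
    by (simp add: sp cong: nn_integral_cong_simp)
next
  case (set A)
  then show ?case using setsD by (simp add: mix_emeasure)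
next
  case (mult f c)
  have "(\<integral>\<^sup>+x. c * f x \<partial>mixture M D r) = c * (\<integral>\<^sup>+x. f x \<partial>mixture M D r)"
    using mult by (intro nn_integral_cmult) (simp cong: measurable_cong_sets)
  also have "\<dots> = (\<Sum>j\<in>UNIV. ennreal (r j) * (\<integral>\<^sup>+x. c * f x \<partial>D j))"
    using mult setsD by (simp add: nn_integral_cmult sum_distrib_left mult.left_commute cong: measurable_cong_sets)
  finally show ?case .
next
  case (add f g)
  then show ?case using setsD
    by (simp add: nn_integral_add distrib_left sum.distrib cong: measurable_cong_sets)
next
  case (seq U)
  have m: "\<And>i j. U i \<in> borel_measurable (D j)" using seq setsD by (simp cong: measurable_cong_sets)
  have "(\<integral>\<^sup>+x. (SUP i. U i) x \<partial>mixture M D r) = (SUP i. \<integral>\<^sup>+x. U i x \<partial>mixture M D r)"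
    using seq by (simp add: nn_integral_monotone_convergence_SUP image_comp cong: measurable_cong_sets)
  also have "\<dots> = (SUP i. \<Sum>j\<in>UNIV. ennreal (r j) * (\<integral>\<^sup>+x. U i x \<partial>D j))"
    using seq by simp
  also have "\<dots> = (\<Sum>j\<in>UNIV. SUP i. ennreal (r j) * (\<integral>\<^sup>+x. U i x \<partial>D j))"
    apply (rule ennreal_SUP_sum)
    using seq(3) m by (auto simp: incseq_def le_fun_def intro!: mult_left_mono nn_integral_mono)
  also have "\<dots> = (\<Sum>j\<in>UNIV. ennreal (r j) * (\<integral>\<^sup>+x. (SUP i. U i) x \<partial>D j))"
    using seq m by (simp add: nn_integral_monotone_convergence_SUP SUP_mult_left_ennreal image_comp)
  finally show ?case .
qed

lemma pim_sets_mix: "sets (PiM I (\<lambda>_. mixture M D r)) = sets (PiM I (\<lambda>_. M))"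
  by (rule sets_PiM_cong) simp_all

lemma pim_sets_D: "(\<And>j. sets (D j) = sets M) \<Longrightarrow> sets (PiM I (\<lambda>i. D (\<sigma> i))) = sets (PiM I (\<lambda>_. M))"
  by (rule sets_PiM_cong) simp_all

lemma pim_nn:
  assumes setsD: "\<And>j. sets (D j) = sets M" and probD: "\<And>j. prob_space (D j)"
    and I: "finite I"
  shows "f \<in> borel_measurable (PiM I (\<lambda>_. M)) \<Longrightarrow>
    (\<integral>\<^sup>+x. f x \<partial>PiM I (\<lambda>_. mixture M D r)) =
    (\<Sum>\<sigma>\<in>PiE I (\<lambda>_. UNIV). (\<Prod>i\<in>I. ennreal (r (\<sigma> i))) * (\<integral>\<^sup>+x. f x \<partial>PiM I (\<lambda>i. D (\<sigma> i))))"
  using I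
proof (induction I arbitrary: f rule: finite_induct)
  case empty
  then show ?case by (simp add: PiM_empty)
next
  case (insert i I)
  have sfD: "sigma_finite_measure (D j)" for j
    using probD prob_space_imp_sigma_finite by blast
  have fmix: "finite_measure (mixture M D r)"
  proof
    show "emeasure (mixture M D r) (space (mixture M D r)) \<noteq> \<infinity>"
    proof -
      have "emeasure (D j) (space M) = 1" for j
        using prob_space.emeasure_space_1[OF probD] sets_eq_imp_space_eq[OF setsD] by metis
      then show ?thesis using setsD by (simp add: mix_emeasure ennreal_mult_eq_top_iff)
    qed
  qed
  interpret PM: product_sigma_finite "\<lambda>_. mixture M D r"
    unfolding product_sigma_finite_def using fmix finite_measure.sigma_finite_measure by blast
  have fm: "f \<in> borel_measurable (PiM (insert i I) (\<lambda>_. mixture M D r))"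
    using insert.prems by (simp add: measurable_cong_sets[OF pim_sets_mix refl])
  have fx: "(\<lambda>y. f (x(i := y))) \<in> borel_measurable M" if "x \<in> space (PiM I (\<lambda>_. M))" for x
    using measurable_comp[OF measurable_component_update[OF that insert.hyps(2)] insert.prems]
    by (simp add: comp_def)
  define g where "g j x = (\<integral>\<^sup>+y. f (x(i := y)) \<partial>D j)" for j x
  have fpair: "(\<lambda>(x, y). f (x(i := y))) \<in> borel_measurable (PiM I (\<lambda>_. M) \<Otimes>\<^sub>M D j)" for j
  proof -
    have "(\<lambda>(x, y). x(i := y)) \<in> measurable (PiM I (\<lambda>_. M) \<Otimes>\<^sub>M D j) (PiM (insert i I) (\<lambda>_. M))"
      using setsD by (simp cong: measurable_cong_sets)
    from measurable_comp[OF this insert.prems] show ?thesis by (simp add: comp_def case_prod_unfold)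
  qed
  have gm: "g j \<in> borel_measurable (PiM I (\<lambda>_. M))" for j
    unfolding g_def using sigma_finite_measure.borel_measurable_nn_integral[OF sfD fpair] by simp
  have "(\<integral>\<^sup>+x. f x \<partial>PiM (insert i I) (\<lambda>_. mixture M D r))
      = (\<integral>\<^sup>+x. (\<integral>\<^sup>+y. f (x(i := y)) \<partial>mixture M D r) \<partial>PiM I (\<lambda>_. mixture M D r))"
    by (rule PM.product_nn_integral_insert[OF insert.hyps(1,2) fm])
  also have "\<dots> = (\<integral>\<^sup>+x. (\<Sum>j\<in>UNIV. ennreal (r j) * g j x) \<partial>PiM I (\<lambda>_. mixture M D r))"
    apply (rule nn_integral_cong)
    unfolding g_def
    apply (rule mix_nn_integral[OF setsD fx])
    apply (simp add: space_PiM)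
    done
  also have "\<dots> = (\<Sum>j\<in>UNIV. ennreal (r j) * (\<integral>\<^sup>+x. g j x \<partial>PiM I (\<lambda>_. mixture M D r)))"
    using gm by (simp add: nn_integral_sum nn_integral_cmult measurable_cong_sets[OF pim_sets_mix refl])
  also have "\<dots> = (\<Sum>j\<in>UNIV. ennreal (r j) * (\<Sum>\<sigma>\<in>PiE I (\<lambda>_. UNIV). (\<Prod>i\<in>I. ennreal (r (\<sigma> i))) * (\<integral>\<^sup>+x. g j x \<partial>PiM I (\<lambda>i. D (\<sigma> i)))))"
    using insert.IH[OF gm] by simp
  also have "\<dots> = (\<Sum>(j, \<sigma>)\<in>UNIV \<times> PiE I (\<lambda>_. UNIV). ennreal (r j) * (\<Prod>i\<in>I. ennreal (r (\<sigma> i))) * (\<integral>\<^sup>+x. g j x \<partial>PiM I (\<lambda>i. D (\<sigma> i))))"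
    by (simp add: sum.cartesian_product[symmetric] sum_distrib_left mult.assoc)
  also have "\<dots> = (\<Sum>(j, \<sigma>)\<in>UNIV \<times> PiE I (\<lambda>_. UNIV). (\<Prod>k\<in>insert i I. ennreal (r ((\<sigma>(i := j)) k))) * (\<integral>\<^sup>+x. f x \<partial>PiM (insert i I) (\<lambda>k. D ((\<sigma>(i := j)) k))))"
  proof (rule sum.cong[OF refl], clarify)
    fix j \<sigma>
    interpret PD: product_sigma_finite "\<lambda>k. D ((\<sigma>(i := j)) k)"
      unfolding product_sigma_finite_def using sfD by blast
    have pr: "(\<Prod>k\<in>insert i I. ennreal (r ((\<sigma>(i := j)) k))) = ennreal (r j) * (\<Prod>k\<in>I. ennreal (r (\<sigma> k)))"
      using insert.hyps by (simp add: prod.insert cong: prod.cong_simp) (intro arg_cong2[where f="(*)"] prod.cong, auto)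
    have pc: "PiM I (\<lambda>k. D ((\<sigma>(i := j)) k)) = PiM I (\<lambda>k. D (\<sigma> k))"
      using insert.hyps by (intro PiM_cong) auto
    have fm2: "f \<in> borel_measurable (PiM (insert i I) (\<lambda>k. D ((\<sigma>(i := j)) k)))"
      unfolding measurable_cong_sets[OF pim_sets_D[of D M "insert i I" "\<sigma>(i:=j)", OF setsD] refl] using insert.prems .
    have "(\<integral>\<^sup>+x. f x \<partial>PiM (insert i I) (\<lambda>k. D ((\<sigma>(i := j)) k))) = (\<integral>\<^sup>+x. g j x \<partial>PiM I (\<lambda>i. D (\<sigma> i)))"
      unfolding PD.product_nn_integral_insert[OF insert.hyps(1,2) fm2] pc g_def by simp
    then show "ennreal (r j) * (\<Prod>i\<in>I. ennreal (r (\<sigma> i))) * (\<integral>\<^sup>+x. g j x \<partial>PiM I (\<lambda>i. D (\<sigma> i))) =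
         (\<Prod>k\<in>insert i I. ennreal (r ((\<sigma>(i := j)) k))) * (\<integral>\<^sup>+x. f x \<partial>PiM (insert i I) (\<lambda>k. D ((\<sigma>(i := j)) k)))"
      by (subst pr) simp
  qed
  also have "\<dots> = (\<Sum>\<sigma>\<in>PiE (insert i I) (\<lambda>_. UNIV). (\<Prod>k\<in>insert i I. ennreal (r (\<sigma> k))) * (\<integral>\<^sup>+x. f x \<partial>PiM (insert i I) (\<lambda>k. D (\<sigma> k))))"
    unfolding PiE_insert_eq
    by (subst sum.reindex[OF inj_combinator[OF insert.hyps(2)]]) (simp add: case_prod_unfold)
  finally show ?case .
qed

lemma mpoly_gen:
  fixes e :: "'a \<Rightarrow> 'n::finite \<Rightarrow> nat"
  assumes X: "finite X"
  shows "mpoly_fun (\<lambda>r. \<Sum>x\<in>X. c x * (\<Prod>j\<in>UNIV. r j ^ e x j))"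
  unfolding mpoly_fun_def
proof (intro exI conjI allI)
  show "finite (e ` X)" using X by simp
  fix r :: "'n \<Rightarrow> real"
  show "(\<Sum>x\<in>X. c x * (\<Prod>j\<in>UNIV. r j ^ e x j)) =
    (\<Sum>\<alpha>\<in>e ` X. (\<Sum>x\<in>{x\<in>X. e x = \<alpha>}. c x) * (\<Prod>j\<in>UNIV. r j ^ \<alpha> j))"
    unfolding sum.image_gen[OF X, of "\<lambda>x. c x * (\<Prod>j\<in>UNIV. r j ^ e x j)" e]
    by (intro sum.cong refl) (simp add: sum_distrib_right)
qed

lemma mpoly_PiE:
  fixes c :: "('b \<Rightarrow> 'n::finite) \<Rightarrow> real"
  assumes I: "finite I"
  shows "mpoly_fun (\<lambda>r. \<Sum>\<sigma>\<in>PiE I (\<lambda>_. UNIV). c \<sigma> * (\<Prod>i\<in>I. r (\<sigma> i)))"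
proof -
  have eq: "(\<Prod>i\<in>I. r (\<sigma> i)) = (\<Prod>j\<in>UNIV. r j ^ card {i\<in>I. \<sigma> i = j})" for r :: "'n \<Rightarrow> real" and \<sigma>
  proof -
    have "(\<Prod>i\<in>I. r (\<sigma> i)) = (\<Prod>j\<in>UNIV. \<Prod>i\<in>{i\<in>I. \<sigma> i = j}. r (\<sigma> i))"
      using I by (rule prod.group[symmetric]) auto
    also have "\<dots> = (\<Prod>j\<in>UNIV. r j ^ card {i\<in>I. \<sigma> i = j})"
      by (intro prod.cong refl) simp
    finally show ?thesis .
  qed
  show ?thesis
    unfolding eq using mpoly_gen[of "PiE I (\<lambda>_. UNIV)" c "\<lambda>\<sigma> j. card {i\<in>I. \<sigma> i = j}"] I
    by (simp add: finite_PiE)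
qed

theorem lemmaB1:
  fixes M :: "'z measure" and D :: "'n::finite \<Rightarrow> 'z measure"
    and loss :: "'h \<Rightarrow> 'z \<Rightarrow> real" and N :: nat and A :: "(nat \<Rightarrow> 'z) \<Rightarrow> 'h"
  assumes probD: "\<And>j. prob_space (D j)"
    and setsD: "\<And>j. sets (D j) = sets M"
    and N: "N \<ge> 1"
    and meas: "(\<lambda>(S, z). loss (A S) z) \<in> borel_measurable (PiM {..<N} (\<lambda>_. M) \<Otimes>\<^sub>M M)"
    and finite_exp: "\<And>r k. (\<forall>j. 0 \<le> r j) \<Longrightarrow> (\<Sum>j\<in>UNIV. r j) = 1 \<Longrightarrow>
        integrable (PiM {..<N} (\<lambda>_. mixture M D r) \<Otimes>\<^sub>M D k) (\<lambda>(S, z). loss (A S) z)"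
  shows "\<forall>k. rational_fun_on pos_orthant (fk M D loss N A k)
            \<and> zero_homogeneous_on pos_orthant (fk M D loss N A k)"
proof (intro allI conjI)
  fix k
  define I where "I = {..<N}"
  have I: "finite I" unfolding I_def by simp
  define g where "g S = (\<integral>z. loss (A S) z \<partial>D k)" for S
  have sfD: "sigma_finite_measure (D j)" for j
    using probD prob_space_imp_sigma_finite by blast
  have meask: "(\<lambda>(S, z). loss (A S) z) \<in> borel_measurable (PiM I (\<lambda>_. M) \<Otimes>\<^sub>M D k)"
    using meas setsD unfolding I_def by (simp cong: measurable_cong_sets)
  have gm: "g \<in> borel_measurable (PiM I (\<lambda>_. M))"
    unfolding g_def using sigma_finite_measure.borel_measurable_lebesgue_integral[OF sfD, of "\<lambda>S z. loss (A S) z"] meask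
    by simp
  have sfmix: "sigma_finite_measure (PiM I (\<lambda>_. mixture M D s))" if s: "\<forall>j. 0 \<le> s j" "(\<Sum>j\<in>UNIV. s j) = 1" for s
  proof -
    have "emeasure (D j) (space M) = 1" for j
      using prob_space.emeasure_space_1[OF probD] sets_eq_imp_space_eq[OF setsD] by metis
    then have "emeasure (mixture M D s) (space (mixture M D s)) = 1"
      using setsD s by (simp add: mix_emeasure sum_ennreal)
    then have "prob_space (mixture M D s)" by (rule prob_spaceI)
    then have "prob_space (PiM I (\<lambda>_. mixture M D s))"
      by (intro prob_space_PiM) auto
    then show ?thesis using prob_space_imp_sigma_finite by blast
  qed
  have intg: "integrable (PiM I (\<lambda>_. mixture M D s)) g" if s: "\<forall>j. 0 \<le> s j" "(\<Sum>j\<in>UNIV. s j) = 1" for s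
  proof -
    interpret P: pair_sigma_finite "PiM I (\<lambda>_. mixture M D s)" "D k"
      unfolding pair_sigma_finite_def using sfmix[OF s] sfD by blast
    show ?thesis unfolding g_def
      using P.integrable_fst[of "\<lambda>S z. loss (A S) z"] finite_exp[OF s, of k] unfolding I_def by simp
  qed
  define P where "P \<sigma> = PiM I (\<lambda>i. D (\<sigma> i))" for \<sigma>
  define cp where "cp \<sigma> = (\<integral>\<^sup>+S. ennreal (g S) \<partial>P \<sigma>)" for \<sigma>
  define cn where "cn \<sigma> = (\<integral>\<^sup>+S. ennreal (- g S) \<partial>P \<sigma>)" for \<sigma>
  have gpm: "(\<lambda>S. ennreal (g S)) \<in> borel_measurable (PiM I (\<lambda>_. M))"
    and gnm: "(\<lambda>S. ennreal (- g S)) \<in> borel_measurable (PiM I (\<lambda>_. M))" using gm by auto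
  have expand: "(\<integral>\<^sup>+S. h S \<partial>PiM I (\<lambda>_. mixture M D s)) =
      (\<Sum>\<sigma>\<in>PiE I (\<lambda>_. UNIV). ennreal (\<Prod>i\<in>I. s (\<sigma> i)) * (\<integral>\<^sup>+S. h S \<partial>P \<sigma>))"
    if "h \<in> borel_measurable (PiM I (\<lambda>_. M))" "\<forall>j. 0 \<le> s j" for h s
    unfolding pim_nn[OF setsD probD I that(1)] P_def using that(2) by (simp add: prod_ennreal)
  define u :: "'n \<Rightarrow> real" where "u j = 1 / real CARD('n)" for j
  have u: "\<forall>j. 0 \<le> u j" "(\<Sum>j\<in>UNIV. u j) = 1" unfolding u_def by auto
  have upos: "0 < (\<Prod>i\<in>I. u (\<sigma> i))" for \<sigma> unfolding u_def by (simp add: prod_pos)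
  have fin: "cp \<sigma> < \<top> \<and> cn \<sigma> < \<top>" if "\<sigma> \<in> PiE I (\<lambda>_. UNIV)" for \<sigma>
  proof -
    have ip: "(\<integral>\<^sup>+S. ennreal (g S) \<partial>PiM I (\<lambda>_. mixture M D u)) < \<top>"
     and inn: "(\<integral>\<^sup>+S. ennreal (- g S) \<partial>PiM I (\<lambda>_. mixture M D u)) < \<top>"
      using intg[OF u] unfolding real_integrable_def by (auto simp: top.not_eq_extremum)
    have le: "ennreal (\<Prod>i\<in>I. u (\<sigma> i)) * F \<sigma> \<le> (\<Sum>\<sigma>\<in>PiE I (\<lambda>_. UNIV). ennreal (\<Prod>i\<in>I. u (\<sigma> i)) * F \<sigma>)"
      for F :: "_ \<Rightarrow> ennreal"
      using that I by (intro member_le_sum) (auto simp: finite_PiE)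
    have "ennreal (\<Prod>i\<in>I. u (\<sigma> i)) * cp \<sigma> < \<top>"
      using le[of cp] ip expand[OF gpm u(1)] unfolding cp_def by simp
    moreover have "ennreal (\<Prod>i\<in>I. u (\<sigma> i)) * cn \<sigma> < \<top>"
      using le[of cn] inn expand[OF gnm u(1)] unfolding cn_def by simp
    ultimately show ?thesis using upos[of \<sigma>]
      by (auto simp: ennreal_mult_less_top)
  qed
  define c where "c \<sigma> = enn2real (cp \<sigma>) - enn2real (cn \<sigma>)" for \<sigma>
  have ebar_eq: "ebar M D loss N A k s = (\<Sum>\<sigma>\<in>PiE I (\<lambda>_. UNIV). c \<sigma> * (\<Prod>i\<in>I. s (\<sigma> i)))"
    if s: "\<forall>j. 0 \<le> s j" "(\<Sum>j\<in>UNIV. s j) = 1" for s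
  proof -
    have nn: "0 \<le> (\<Prod>i\<in>I. s (\<sigma> i))" for \<sigma> using s by (simp add: prod_nonneg)
    have e1: "enn2real (\<Sum>\<sigma>\<in>PiE I (\<lambda>_. UNIV). ennreal (\<Prod>i\<in>I. s (\<sigma> i)) * F \<sigma>)
        = (\<Sum>\<sigma>\<in>PiE I (\<lambda>_. UNIV). (\<Prod>i\<in>I. s (\<sigma> i)) * enn2real (F \<sigma>))"
      if "\<And>\<sigma>. \<sigma> \<in> PiE I (\<lambda>_. UNIV) \<Longrightarrow> F \<sigma> < \<top>" for F
      using that by (subst enn2real_sum) (auto simp: ennreal_mult_less_top enn2real_mult nn)
    have "ebar M D loss N A k s = (\<integral>S. g S \<partial>PiM I (\<lambda>_. mixture M D s))"
      unfolding ebar_def g_def I_def ..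
    also have "\<dots> = enn2real (\<integral>\<^sup>+S. ennreal (g S) \<partial>PiM I (\<lambda>_. mixture M D s))
        - enn2real (\<integral>\<^sup>+S. ennreal (- g S) \<partial>PiM I (\<lambda>_. mixture M D s))"
      by (rule real_lebesgue_integral_def[OF intg[OF s]])
    also have "\<dots> = (\<Sum>\<sigma>\<in>PiE I (\<lambda>_. UNIV). (\<Prod>i\<in>I. s (\<sigma> i)) * enn2real (cp \<sigma>))
        - (\<Sum>\<sigma>\<in>PiE I (\<lambda>_. UNIV). (\<Prod>i\<in>I. s (\<sigma> i)) * enn2real (cn \<sigma>))"
      unfolding expand[OF gpm s(1)] expand[OF gnm s(1)] cp_def[symmetric] cn_def[symmetric]
      using fin by (simp add: e1)
    also have "\<dots> = (\<Sum>\<sigma>\<in>PiE I (\<lambda>_. UNIV). c \<sigma> * (\<Prod>i\<in>I. s (\<sigma> i)))"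
      unfolding c_def by (simp add: sum_subtractf[symmetric] algebra_simps)
    finally show ?thesis .
  qed
  have cardI: "card I = N" unfolding I_def by simp
  show "rational_fun_on pos_orthant (fk M D loss N A k)"
    unfolding rational_fun_on_def
  proof (intro exI conjI ballI)
    show "mpoly_fun (\<lambda>r. \<Sum>\<sigma>\<in>PiE I (\<lambda>_. UNIV). c \<sigma> * (\<Prod>i\<in>I. r (\<sigma> i)))"
      by (rule mpoly_PiE[OF I])
    have mp1: "mpoly_fun (\<lambda>r::'n \<Rightarrow> real. \<Sum>\<sigma>\<in>PiE I (\<lambda>_. UNIV). 1 * (\<Prod>i\<in>I. r (\<sigma> i)))"
      by (rule mpoly_PiE[OF I])
    have qeq: "(\<Sum>\<sigma>\<in>PiE I (\<lambda>_. UNIV). 1 * (\<Prod>i\<in>I. r (\<sigma> i))) = (\<Sum>j\<in>UNIV. r j) ^ N" for r :: "'n \<Rightarrow> real"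
      using prod_sum_PiE[OF I, of "\<lambda>_. UNIV" "\<lambda>_ j. r j"] cardI by simp
    show "mpoly_fun (\<lambda>r::'n \<Rightarrow> real. (\<Sum>j\<in>UNIV. r j) ^ N)" 
    proof -
      have "(\<lambda>r. \<Sum>\<sigma>\<in>PiE I (\<lambda>_. UNIV). 1 * (\<Prod>i\<in>I. r (\<sigma> i))) = (\<lambda>r::'n \<Rightarrow> real. (\<Sum>j\<in>UNIV. r j) ^ N)"
        by (rule ext) (rule qeq)
      then show ?thesis using mp1 by simp
    qed
    fix r :: "'n \<Rightarrow> real" assume r: "r \<in> pos_orthant"
    have rnn: "\<forall>j. 0 \<le> r j" using r unfolding pos_orthant_def by simp
    obtain j0 where "r j0 \<noteq> 0" using r unfolding pos_orthant_def by auto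
    then have "0 < r j0" using rnn by (metis less_eq_real_def)
    then have tpos: "0 < (\<Sum>j\<in>UNIV. r j)"
    proof -
      have "r j0 \<le> (\<Sum>j\<in>UNIV. r j)" by (rule member_le_sum) (use rnn in auto)
      then show ?thesis using \<open>0 < r j0\<close> by linarith
    qed
    then show "(\<Sum>j\<in>UNIV. r j) ^ N \<noteq> 0" by simp
    define t where "t = (\<Sum>j\<in>UNIV. r j)"
    have s: "\<forall>j. 0 \<le> r j / t" "(\<Sum>j\<in>UNIV. r j / t) = 1"
      using rnn tpos unfolding t_def by (auto simp: sum_divide_distrib[symmetric])
    have "fk M D loss N A k r = (\<Sum>\<sigma>\<in>PiE I (\<lambda>_. UNIV). c \<sigma> * (\<Prod>i\<in>I. r (\<sigma> i) / t))"
      unfolding fk_def t_def[symmetric] using ebar_eq[OF s] by simp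
    also have "\<dots> = (\<Sum>\<sigma>\<in>PiE I (\<lambda>_. UNIV). c \<sigma> * (\<Prod>i\<in>I. r (\<sigma> i))) / t ^ N"
      by (simp add: prod_dividef cardI sum_divide_distrib)
    finally show "fk M D loss N A k r = (\<Sum>\<sigma>\<in>PiE I (\<lambda>_. UNIV). c \<sigma> * (\<Prod>i\<in>I. r (\<sigma> i))) / (\<Sum>j\<in>UNIV. r j) ^ N"
      unfolding t_def .
  qed
  show "zero_homogeneous_on pos_orthant (fk M D loss N A k)"
    unfolding zero_homogeneous_on_def
  proof (intro ballI allI impI)
    fix r :: "'n \<Rightarrow> real" and a :: real assume "a > 0"
    then have "(\<lambda>j. a * r j / (\<Sum>i\<in>UNIV. a * r i)) = (\<lambda>j. r j / (\<Sum>i\<in>UNIV. r i))"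
      by (simp add: sum_distrib_left[symmetric])
    then show "fk M D loss N A k (\<lambda>j. a * r j) = fk M D loss N A k r"
      unfolding fk_def by simp
  qed
qed

end
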